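(* Let $\alpha>2$, $\theta_0\ge 0$, $r_0>0$, and $\overline{R}_{\theta_0}=\log_2(1+\theta_0)$. For each integer $N\ge 1$ let $p_N$ be the activity probability of either TDMA or FDMA/TDMA, $$p_N^{\mathrm{TDMA}}=\tfrac1N\Pr\{K>0\},\qquad p_N^{\mathrm{FDMA/TDMA}}=\tfrac1N\textstyle\sum_{k>0}\Pr\{K=k\}\min\{k,N\},$$ with $K$ distributed as $\Pr\{K=k\}=\frac{3.5^{3.5}\Gamma(k+3.5)\tau^{3.5}}{\Gamma(3.5)k!(1+3.5\tau)^{k+3.5}}$, $k\ge0$, for some $\tau>0$. Let $F_N(\theta)=1-\frac{1}{1+p_N\rho(\theta)}$ and assume the delay satisfies $\Pr\{L=0\}=1$, so that the rate outage probability is $$F_R(N)=\begin{cases}F_N(\theta_0),& N\le \overline{R}_{\theta_0}/r_0,\\ F_N(2^{r_0N}-1),& N\ge \overline{R}_{\theta_0}/r_0.\end{cases}$$ Then every integer $N^*\ge1$ minimizing $F_R(N)$ over $N\ge 1$ satisfies $$N^*\ge \max\big\{1,\lfloor \overline{R}_{\theta_0}/r_0\rfloor\big\}.$$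
   Context: $\rho(\theta)=\theta^{2/\alpha}\int_{\theta^{-2/\alpha}}^{\infty}\frac{du}{1+u^{\alpha/2}}$ for $\theta>0$ and $\rho(0)=0$. $F_N$ is the CDF of the SIR of the typical UE when $N$ subchannels are used; $F_R(N)$ is the probability that the user rate $R=\mathbf{1}\{\mathrm{SIR}\ge\theta_0\}\log_2(1+\mathrm{SIR})/N$ is at most $r_0$. TDMA: one UE served per slot on one uniformly random subchannel out of $N$. FDMA/TDMA: UEs randomly ordered and assigned distinct uniformly random subchannels within consecutive blocks of $N$, subchannels being time-shared across blocks. *)

theory Defs
  imports "HOL-Analysis.Analysis"
begin

definition rho :: "real \<Rightarrow> real \<Rightarrow> real" where
  "rho \<alpha> \<theta> = (if \<theta> = 0 then 0 else
     \<theta> powr (2/\<alpha>) * (LBINT u:{\<theta> powr (-2/\<alpha>)..}. 1 / (1 + u powr (\<alpha>/2))))"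

definition K_pmf :: "real \<Rightarrow> nat \<Rightarrow> real" where
  "K_pmf \<tau> k = (7/2) powr (7/2) * Gamma (real k + 7/2) * \<tau> powr (7/2) /
      (Gamma (7/2) * fact k * (1 + (7/2) * \<tau>) powr (real k + 7/2))"

definition p_TDMA :: "real \<Rightarrow> nat \<Rightarrow> real" where
  "p_TDMA \<tau> N = (1 / real N) * (1 - K_pmf \<tau> 0)"

definition p_FDMA_TDMA :: "real \<Rightarrow> nat \<Rightarrow> real" where
  "p_FDMA_TDMA \<tau> N = (1 / real N) * (\<Sum>k. if k > 0 then K_pmf \<tau> k * real (min k N) else 0)"

definition F_SIR :: "real \<Rightarrow> (nat \<Rightarrow> real) \<Rightarrow> nat \<Rightarrow> real \<Rightarrow> real" where
  "F_SIR \<alpha> p N \<theta> = 1 - 1 / (1 + p N * rho \<alpha> \<theta>)"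

definition Rbar :: "real \<Rightarrow> real" where
  "Rbar \<theta>0 = log 2 (1 + \<theta>0)"

definition F_R :: "real \<Rightarrow> (nat \<Rightarrow> real) \<Rightarrow> real \<Rightarrow> real \<Rightarrow> nat \<Rightarrow> real" where
  "F_R \<alpha> p \<theta>0 r0 N = (if real N \<le> Rbar \<theta>0 / r0 then F_SIR \<alpha> p N \<theta>0
      else F_SIR \<alpha> p N (2 powr (r0 * real N) - 1))"

end

theory Submission
  imports Defs
begin

lemma rho_pos:
  assumes "\<alpha> > 2" "\<theta> > 0"
  shows "rho \<alpha> \<theta> > 0"
proof -
  define a where "a = \<theta> powr (-2/\<alpha>)"
  define e where "e = -(\<alpha>/2)"
  define f where "f = (\<lambda>u::real. 1 / (1 + u powr (\<alpha>/2)))"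
  have a: "a > 0" unfolding a_def using assms by simp
  have e: "e < -1" unfolding e_def using assms by simp
  have gI: "((\<lambda>x. x powr e) has_integral -(a powr (e+1)) / (e+1)) {a..}"
    by (rule has_integral_powr_to_inf[OF e a])
  have gmeas: "(\<lambda>x. indicator {a..} x *\<^sub>R x powr e) \<in> borel_measurable lborel"
    by measurable
  have gnn: "integral\<^sup>N lborel (\<lambda>x. indicator {a..} x * x powr e) = -(a powr (e+1)) / (e+1)"
    by (rule nn_integral_has_integral_lebesgue[OF _ gI]) simp
  have gint: "set_integrable lborel {a..} (\<lambda>x. x powr e)"
    unfolding set_integrable_def
    apply (rule integrableI_nonneg[OF gmeas])
    using gnn by (auto simp: indicator_def)
  have fint: "set_integrable lborel {a..} f"
  proof (rule set_integrable_bound[OF gint])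
    show "set_borel_measurable lborel {a..} f"
      unfolding set_borel_measurable_def f_def by measurable
    show "AE x in lborel. x \<in> {a..} \<longrightarrow> norm (f x) \<le> norm (x powr e)"
    proof (rule AE_I2, rule impI)
      fix x assume x: "x \<in> {a..}"
      then have xp: "x > 0" using a by simp
      have "x powr (\<alpha>/2) > 0" using xp by simp
      then have "f x \<le> 1 / x powr (\<alpha>/2)" unfolding f_def
        using \<open>x powr (\<alpha>/2) > 0\<close> by (intro divide_left_mono) (simp_all add: add_pos_nonneg)
      also have "\<dots> = x powr e" unfolding e_def by (rule powr_minus_divide[symmetric])
      finally show "norm (f x) \<le> norm (x powr e)" 
        using \<open>x powr (\<alpha>/2) > 0\<close> unfolding f_def by simp
    qed
  qed
  have eq: "(LBINT u:{a..}. f u) = integral {a..} f" and fon: "f integrable_on {a..}"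
    using set_borel_integral_eq_integral[OF fint] by auto
  have pos': "\<And>u::real. 1 + u powr (\<alpha>/2) > 0"
    by (metis add_pos_nonneg powr_ge_zero zero_less_one)
  have pos: "\<And>u::real. 1 + u powr (\<alpha>/2) \<noteq> 0"
    using pos' by (metis less_irrefl)
  have cont: "continuous_on {a..a+1} f" unfolding f_def using a pos
    by (intro continuous_intros) auto
  have "integral {a..a+1} f \<le> integral {a..} f"
    by (rule integral_subset_le) (use fon cont integrable_continuous_interval a in \<open>auto simp: f_def\<close>)
  moreover have "integral {a..a+1} (\<lambda>_. f (a+1)) \<le> integral {a..a+1} f"
  proof (rule integral_le)
    show "(\<lambda>_. f (a+1)) integrable_on {a..a+1}" by (rule integrable_const_ivl)
    show "f integrable_on {a..a+1}" using cont integrable_continuous_interval by blast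
    fix x assume "x \<in> {a..a+1}"
    then have "x powr (\<alpha>/2) \<le> (a+1) powr (\<alpha>/2)" using a assms by (intro powr_mono2) auto
    then show "f (a+1) \<le> f x" unfolding f_def using a \<open>x \<in> {a..a+1}\<close>
      by (intro divide_left_mono) (auto intro!: mult_pos_pos pos')
  qed
  moreover have "f (a+1) > 0" unfolding f_def using a by (simp add: add_pos_nonneg)
  ultimately have "integral {a..} f > 0" by simp
  then show ?thesis unfolding rho_def using assms eq
    by (simp add: a_def f_def)
qed

lemma K_pos: assumes "\<tau> > 0" shows "K_pmf \<tau> k > 0"
  unfolding K_pmf_def using assms by (intro divide_pos_pos mult_pos_pos) auto

lemma K0_lt1: assumes "\<tau> > 0" shows "K_pmf \<tau> 0 < 1"
proof -
  have g: "Gamma (7/2::real) \<noteq> 0" by (simp add: less_imp_neq[symmetric])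
  have "K_pmf \<tau> 0 = ((7/2) powr (7/2) * \<tau> powr (7/2)) / (1 + (7/2) * \<tau>) powr (7/2)"
    unfolding K_pmf_def using g by simp
  also have "\<dots> = ((7/2) * \<tau>) powr (7/2) / (1 + (7/2) * \<tau>) powr (7/2)"
    using assms by (subst powr_mult) auto
  also have "\<dots> < 1"
  proof -
    have "((7/2) * \<tau>) powr (7/2) < (1 + (7/2) * \<tau>) powr (7/2)"
      using assms by (intro powr_less_mono2) auto
    moreover have "(1 + (7/2) * \<tau>) powr (7/2) > 0" using assms by simp
    ultimately show ?thesis by simp
  qed
  finally show ?thesis .
qed

lemma K_Suc: assumes "\<tau> > 0"
  shows "K_pmf \<tau> (Suc k) = K_pmf \<tau> k * ((real k + 7/2) / ((real k + 1) * (1 + (7/2) * \<tau>)))"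
proof -
  have h1: "Gamma (real (Suc k) + 7/2) = (real k + 7/2) * Gamma (real k + 7/2)"
  proof -
    have "real k + 7/2 \<notin> \<int>\<^sub>\<le>\<^sub>0" by (auto dest: nonpos_Ints_nonpos)
    then have "Gamma ((real k + 7/2) + 1) = (real k + 7/2) * Gamma (real k + 7/2)"
      by (rule Gamma_plus1)
    then show ?thesis by (simp add: add_ac)
  qed
  moreover have h2: "(1 + (7/2) * \<tau>) powr (real (Suc k) + 7/2) = (1 + (7/2) * \<tau>) * (1 + (7/2) * \<tau>) powr (real k + 7/2)"
  proof -
    have e: "real (Suc k) + 7/2 = (real k + 7/2) + 1" by simp
    show ?thesis unfolding e powr_add using assms by simp
  qed
  moreover have h3: "fact (Suc k) = (real k + 1) * (fact k :: real)" by (simp add: fact_Suc)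
  moreover have ps: "Gamma (real k + 7/2) > 0" "Gamma (7/2::real) > 0" "(1 + (7/2) * \<tau>) powr (real k + 7/2) > 0"
    "fact k > (0::real)" "1 + (7/2) * \<tau> > 0"
    using assms by auto
  moreover have alg: "\<And>A x G T G0 m F q P::real. G0 \<noteq> 0 \<Longrightarrow> F \<noteq> 0 \<Longrightarrow> P \<noteq> 0 \<Longrightarrow> q \<noteq> 0 \<Longrightarrow> m \<noteq> 0 \<Longrightarrow>
      A * (x*G) * T / (G0 * (m * F) * (q * P)) = A*G*T/(G0*F*P) * (x / (m*q))"
    by (simp add: field_simps)
  have nz: "Gamma (7/2::real) \<noteq> 0" "(fact k::real) \<noteq> 0" "(1 + (7/2) * \<tau>) powr (real k + 7/2) \<noteq> 0"
     "1 + (7/2) * \<tau> \<noteq> 0" "real k + 1 \<noteq> 0"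
    using ps by linarith+
  show ?thesis unfolding K_pmf_def h1 h2 h3
    by (rule alg[OF nz])
qed

lemma K_summable: assumes "\<tau> > 0" shows "summable (K_pmf \<tau>)"
proof (rule summable_ratio_test[where c = "(2 + (7/2)*\<tau>) / (2 * (1 + (7/2) * \<tau>))" and N = "nat \<lceil>2/\<tau>\<rceil>"])
  show "(2 + (7/2)*\<tau>) / (2 * (1 + (7/2) * \<tau>)) < 1" using assms by simp
  fix n assume n: "nat \<lceil>2/\<tau>\<rceil> \<le> n"
  then have "2/\<tau> \<le> real n" by linarith
  then have "2 \<le> \<tau> * real n" using assms by (simp add: field_simps)
  then have r: "(real n + 7/2) / ((real n + 1) * (1 + (7/2) * \<tau>)) \<le> (2 + (7/2)*\<tau>) / (2 * (1 + (7/2) * \<tau>))"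
  proof -
    have q: "1 + (7/2) * \<tau> > 0" using assms by simp
    have "2*(real n + 7/2) \<le> (real n+1)*(2+(7/2)*\<tau>)"
      using \<open>2 \<le> \<tau> * real n\<close> assms by (simp add: algebra_simps)
    then have "(real n + 7/2) / (real n + 1) \<le> (2+(7/2)*\<tau>) / 2"
      by (simp add: pos_divide_le_eq mult.commute)
    then have "(real n + 7/2) / (real n + 1) / (1 + (7/2) * \<tau>) \<le> (2+(7/2)*\<tau>) / 2 / (1 + (7/2) * \<tau>)"
      using q by (intro divide_right_mono) auto
    then show ?thesis by (simp add: divide_divide_eq_left)
  qed
  have kp: "K_pmf \<tau> n > 0" "K_pmf \<tau> (Suc n) > 0" using K_pos[OF assms] by auto
  have "norm (K_pmf \<tau> (Suc n)) = K_pmf \<tau> (Suc n)"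
    using kp(2) by simp
  also have "\<dots> = K_pmf \<tau> n * ((real n + 7/2) / ((real n + 1) * (1 + (7/2) * \<tau>)))"
    by (rule K_Suc[OF assms])
  also have "\<dots> \<le> K_pmf \<tau> n * ((2 + (7/2)*\<tau>) / (2 * (1 + (7/2) * \<tau>)))"
    by (rule mult_left_mono[OF r]) (use kp in simp)
  also have "\<dots> = (2 + (7/2)*\<tau>) / (2 * (1 + (7/2) * \<tau>)) * norm (K_pmf \<tau> n)"
    using kp(1) by simp
  finally show "norm (K_pmf \<tau> (Suc n)) \<le> (2 + (7/2)*\<tau>) / (2 * (1 + (7/2) * \<tau>)) * norm (K_pmf \<tau> n)" .
qed

lemma p_dec:
  assumes tau: "\<tau> > 0" and hp: "p = p_TDMA \<tau> \<or> p = p_FDMA_TDMA \<tau>" and N: "N \<ge> 1"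
  shows "0 \<le> p (Suc N) \<and> p (Suc N) < p N"
  using hp
proof
  assume p: "p = p_TDMA \<tau>"
  define c where "c = 1 - K_pmf \<tau> 0"
  have c: "c > 0" unfolding c_def using K0_lt1[OF tau] by simp
  have "1 / real (Suc N) < 1 / real N" using N by (simp add: frac_less2)
  then have "1 / real (Suc N) * c < 1 / real N * c" using c by (rule mult_strict_right_mono)
  moreover have "0 \<le> 1 / real (Suc N) * c" using c by simp
  ultimately show ?thesis unfolding p p_TDMA_def c_def by simp
next
  assume p: "p = p_FDMA_TDMA \<tau>"
  define h where "h = (\<lambda>M k. if k > 0 then K_pmf \<tau> k * real (min k M) else 0)"
  have hnn: "\<And>M k. h M k \<ge> 0" unfolding h_def using K_pos[OF tau] by (simp add: less_imp_le)
  have hs: "\<And>M. summable (h M)"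
  proof -
    fix M
    show "summable (h M)"
    proof (rule summable_comparison_test'[where N=0])
      show "summable (\<lambda>k. real M * K_pmf \<tau> k)" by (rule summable_mult[OF K_summable[OF tau]])
      fix k :: nat
      have "real (min k M) \<le> real M" by simp
      then have "K_pmf \<tau> k * real (min k M) \<le> real M * K_pmf \<tau> k"
        using K_pos[OF tau, of k] by (simp add: mult.commute mult_left_mono)
      then show "norm (h M k) \<le> real M * K_pmf \<tau> k"
        using hnn[of M k] K_pos[OF tau, of k] unfolding h_def by auto
    qed
  qed
  have pe: "p M = suminf (\<lambda>k. h M k / real M)" for M
  proof -
    have "p M = (1/real M) * suminf (h M)" unfolding p p_FDMA_TDMA_def h_def by simp
    then show ?thesis using suminf_divide[OF hs, of M "real M"] by simp
  qed
  define d where "d = (\<lambda>k. h N k / real N - h (Suc N) k / real (Suc N))"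
  have ds: "summable d" unfolding d_def by (intro summable_diff summable_divide hs)
  have deq: "p N - p (Suc N) = suminf d"
    unfolding pe d_def by (intro suminf_diff summable_divide hs)
  have dnn: "\<And>k. d k \<ge> 0"
  proof -
    fix k :: nat
    show "d k \<ge> 0"
    proof (cases "k \<le> N")
      case True
      then have e1: "h N k = K_pmf \<tau> k * real k" and e2: "h (Suc N) k = K_pmf \<tau> k * real k"
        unfolding h_def by auto
      have "d k = (K_pmf \<tau> k * real k) * (1 / real N - 1 / real (Suc N))"
        unfolding d_def e1 e2 by (simp add: right_diff_distrib)
      moreover have "1 / real (Suc N) \<le> 1 / real N" using N by (simp add: frac_le)
      ultimately show ?thesis using K_pos[OF tau, of k] by simp
    next
      case False
      then have "h N k / real N = K_pmf \<tau> k" "h (Suc N) k / real (Suc N) = K_pmf \<tau> k"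
        unfolding h_def using N by auto
      then show ?thesis unfolding d_def by simp
    qed
  qed
  have d1: "d 1 > 0"
  proof -
    have "d 1 = K_pmf \<tau> 1 * (1 / real N - 1 / real (Suc N))"
      unfolding d_def h_def using N by (simp add: right_diff_distrib)
    moreover have "1 / real (Suc N) < 1 / real N" using N by (simp add: frac_less2)
    ultimately show ?thesis using K_pos[OF tau, of 1] by simp
  qed
  have "suminf d > 0" by (rule suminf_pos2[OF ds dnn d1])
  moreover have "0 \<le> p (Suc N)" unfolding pe
    by (intro suminf_nonneg summable_divide hs) (simp add: hnn)
  ultimately show ?thesis using deq by simp
qed

theorem proposition2:
  fixes \<alpha> \<theta>0 r0 \<tau> :: real and p :: "nat \<Rightarrow> real" and Nstar :: nat
  assumes "\<alpha> > 2" and "\<theta>0 \<ge> 0" and "r0 > 0" and "\<tau> > 0"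
    and "p = p_TDMA \<tau> \<or> p = p_FDMA_TDMA \<tau>"
    and "Nstar \<ge> 1"
    and "\<forall>N\<ge>1. F_R \<alpha> p \<theta>0 r0 Nstar \<le> F_R \<alpha> p \<theta>0 r0 N"
  shows "int Nstar \<ge> max 1 \<lfloor>Rbar \<theta>0 / r0\<rfloor>"
proof (rule ccontr)
  assume "\<not> ?thesis"
  then have lt: "int Nstar < \<lfloor>Rbar \<theta>0 / r0\<rfloor>" using assms(6) by linarith
  then have "int (Suc Nstar) \<le> \<lfloor>Rbar \<theta>0 / r0\<rfloor>" by simp
  then have le1: "real (Suc Nstar) \<le> Rbar \<theta>0 / r0" by (simp add: le_floor_iff)
  then have le0: "real Nstar \<le> Rbar \<theta>0 / r0" by simp
  have "real (Suc Nstar) > 0" by simp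
  then have "Rbar \<theta>0 / r0 > 0" using le1 by linarith
  then have "Rbar \<theta>0 > 0" using assms(3) by (simp add: zero_less_divide_iff)
  then have th: "\<theta>0 > 0" using assms(2) unfolding Rbar_def
    by (cases "\<theta>0 = 0") auto
  have rp: "rho \<alpha> \<theta>0 > 0" by (rule rho_pos[OF assms(1) th])
  from p_dec[OF assms(4) assms(5) assms(6)]
  have pd: "0 \<le> p (Suc Nstar)" "p (Suc Nstar) < p Nstar" by auto
  have "p (Suc Nstar) * rho \<alpha> \<theta>0 < p Nstar * rho \<alpha> \<theta>0"
    using pd(2) rp by simp
  moreover have "0 \<le> p (Suc Nstar) * rho \<alpha> \<theta>0" using pd(1) rp by simp
  ultimately have "1 / (1 + p Nstar * rho \<alpha> \<theta>0) < 1 / (1 + p (Suc Nstar) * rho \<alpha> \<theta>0)"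
    by (intro divide_strict_left_mono) auto
  then have "F_R \<alpha> p \<theta>0 r0 (Suc Nstar) < F_R \<alpha> p \<theta>0 r0 Nstar"
    unfolding F_R_def F_SIR_def using le0 le1 by simp
  moreover have "F_R \<alpha> p \<theta>0 r0 Nstar \<le> F_R \<alpha> p \<theta>0 r0 (Suc Nstar)"
    using assms(7) by simp
  ultimately show False by simp
qed

end
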